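(* Let $\lambda$ be an infinite cardinal and let $\mu$ be a cardinal with $3\leq\mu\leq\lambda^+$. Then $\lambda^+\not\to_{hc}(\mu)^2_\lambda$: there is a coloring $c:[\lambda^+]^2\to\lambda$ such that for no $\xi<\lambda$ and no $X\subseteq\lambda^+$ with $|X|=\mu$ is the graph $(X,c^{-1}(\xi)\cap[X]^2)$ highly connected.
   Context: $[S]^2$ denotes the set of $2$-element subsets of $S$. A graph $G=(V,E)$ is highly connected if for every $D\subseteq V$ with $|D|<|V|$ the graph induced on $V\setminus D$ is connected. For cardinals $\nu,\mu,\lambda$, $\nu\to_{hc}(\mu)^2_\lambda$ means: for every $c:[\nu]^2\to\lambda$ there exist $\xi<\lambda$ and $X\subseteq\nu$ with $|X|=\mu$ such that $(X,c^{-1}(\xi)\cap[X]^2)$ is highly connected; $\not\to_{hc}$ is its negation. *)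

theory Defs
  imports Main
begin

text \<open>Cardinals are represented by sets up to equipollence, compared with the
  cardinal-order machinery of Main (card_of, ordLeq, ordIso, cardSuc).\<close>

definition two_subsets :: "'a set \<Rightarrow> 'a set set" where
  "two_subsets S = {e. e \<subseteq> S \<and> card e = 2}"

definition graph_connected :: "'a set \<Rightarrow> 'a set set \<Rightarrow> bool" where
  "graph_connected V E \<longleftrightarrow>
     (\<forall>x\<in>V. \<forall>y\<in>V. (\<lambda>a b. a \<in> V \<and> b \<in> V \<and> {a, b} \<in> E)\<^sup>*\<^sup>* x y)"

definition induced_edges :: "'a set set \<Rightarrow> 'a set \<Rightarrow> 'a set set" where
  "induced_edges E W = E \<inter> two_subsets W"

definition highly_connected :: "'a set \<Rightarrow> 'a set set \<Rightarrow> bool" where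
  "highly_connected V E \<longleftrightarrow>
     (\<forall>D \<subseteq> V. (card_of D, card_of V) \<in> ordLess \<longrightarrow> graph_connected (V - D) (induced_edges E (V - D)))"

end

theory Submission
  imports Defs
begin

inductive_set ups :: "'x rel \<Rightarrow> 'x set set \<Rightarrow> 'x \<Rightarrow> 'x set" for R E c where
  base: "c \<in> ups R E c"
| step: "a \<in> ups R E c \<Longrightarrow> a \<in> underS R b \<Longrightarrow> {a,b} \<in> E \<Longrightarrow> b \<in> ups R E c"

lemma wo_facts:
  assumes "Well_order R"
  shows "trans R" "antisym R" "\<And>a b. a \<in> Field R \<Longrightarrow> b \<in> Field R \<Longrightarrow> a \<noteq> b \<Longrightarrow> (a,b) \<in> R \<or> (b,a) \<in> R"
  using assms unfolding order_on_defs total_on_def by auto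

lemma underS_trans:
  assumes "Well_order R" "a \<in> underS R b" "b \<in> underS R d"
  shows "a \<in> underS R d"
proof -
  have "(a,b) \<in> R" "(b,d) \<in> R" "a \<noteq> b" "b \<noteq> d" using assms(2,3) unfolding underS_def by auto
  moreover have "trans R" "antisym R" using wo_facts assms(1) by auto
  ultimately show ?thesis unfolding underS_def trans_def antisym_def by blast
qed

lemma underS_asym:
  assumes "Well_order R" "a \<in> underS R b" "b \<in> underS R a"
  shows False
  using assms wo_facts(2)[OF assms(1)] unfolding underS_def antisym_def by blast

lemma ups_ge:
  assumes "Well_order R" "b \<in> ups R E c"
  shows "b = c \<or> c \<in> underS R b"
  using assms(2)
proof (induction rule: ups.induct)
  case base then show ?case by simp
next
  case (step a b)
  then show ?case using underS_trans[OF assms(1)] by blast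
qed

lemma three_max:
  assumes W: "Well_order R" and "p \<in> Field R" "q \<in> Field R" "s \<in> Field R"
    and "p \<noteq> q" "q \<noteq> s" "p \<noteq> s"
  shows "\<exists>t u v. t \<in> {p,q,s} \<and> u \<in> {p,q,s} \<and> v \<in> {p,q,s} \<and> u \<noteq> v \<and>
     u \<in> underS R t \<and> v \<in> underS R t"
proof -
  have tot: "\<And>a b. a \<in> Field R \<Longrightarrow> b \<in> Field R \<Longrightarrow> a \<noteq> b \<Longrightarrow> a \<in> underS R b \<or> b \<in> underS R a"
    using wo_facts(3)[OF W] unfolding underS_def by auto
  have tr: "\<And>a b d. a \<in> underS R b \<Longrightarrow> b \<in> underS R d \<Longrightarrow> a \<in> underS R d"
    using underS_trans[OF W] by blast
  have as: "\<And>a b. a \<in> underS R b \<Longrightarrow> b \<in> underS R a \<Longrightarrow> False"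
    using underS_asym[OF W] by blast
  have 1: "p \<in> underS R q \<or> q \<in> underS R p" using tot assms by blast
  have 2: "q \<in> underS R s \<or> s \<in> underS R q" using tot assms by blast
  have 3: "p \<in> underS R s \<or> s \<in> underS R p" using tot assms by blast
  have "(q \<in> underS R p \<and> s \<in> underS R p) \<or> (p \<in> underS R q \<and> s \<in> underS R q)
     \<or> (p \<in> underS R s \<and> q \<in> underS R s)"
    using 1 2 3 tr as by meson
  then show ?thesis
  proof (elim disjE)
    assume "q \<in> underS R p \<and> s \<in> underS R p"
    then show ?thesis using assms by (intro exI[of _ p] exI[of _ q] exI[of _ s]) auto
  next
    assume "p \<in> underS R q \<and> s \<in> underS R q"
    then show ?thesis using assms by (intro exI[of _ q] exI[of _ p] exI[of _ s]) auto
  next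
    assume "p \<in> underS R s \<and> q \<in> underS R s"
    then show ?thesis using assms by (intro exI[of _ s] exI[of _ p] exI[of _ q]) auto
  qed
qed

lemma two_sub_pair:
  assumes "e \<in> two_subsets S"
  shows "\<exists>a b. e = {a,b} \<and> a \<noteq> b \<and> a \<in> S \<and> b \<in> S"
  using assms unfolding two_subsets_def by (auto simp: card_2_iff)

theorem mainTheorem3:
  fixes L :: "'a set" and M :: "'b set"
  assumes "infinite L"
    and "(card_of {0, 1, 2 :: nat}, card_of M) \<in> ordLeq"
    and "(card_of M, cardSuc (card_of L)) \<in> ordLeq"
  shows "\<exists>c :: 'a set set \<Rightarrow> 'a.
           (\<forall>e \<in> two_subsets (Field (cardSuc (card_of L))). c e \<in> L) \<and>
           \<not> (\<exists>\<xi> \<in> L. \<exists>X \<subseteq> Field (cardSuc (card_of L)). (card_of X, card_of M) \<in> ordIso \<and>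
                 highly_connected X {e \<in> two_subsets X. c e = \<xi>})"
proof -
  define R where "R = cardSuc (card_of L)"
  define V where "V = Field R"
  have CO: "Card_order R" unfolding R_def by (simp add: cardSuc_Card_order card_of_Card_order)
  have W: "Well_order R" using CO unfolding card_order_on_def by blast
  have "\<forall>b\<in>V. \<exists>g. inj_on g (underS R b) \<and> g ` underS R b \<subseteq> L"
  proof
    fix b assume "b \<in> V"
    then have "(card_of (underS R b), R) \<in> ordLess" using card_of_underS[OF CO, of b] V_def by simp
    then have "(card_of (underS R b), card_of L) \<in> ordLeq"
      using cardSuc_ordLeq_ordLess[OF card_of_Card_order[of L] card_of_Card_order[of "underS R b"]] by (simp add: R_def)
    then show "\<exists>g. inj_on g (underS R b) \<and> g ` underS R b \<subseteq> L" using card_of_ordLeq[of "underS R b" L] by simp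
  qed
  then obtain f where f: "\<forall>b\<in>V. inj_on (f b) (underS R b) \<and> f b ` underS R b \<subseteq> L"
    by (rule bchoice[elim_format]) blast
  then have f: "\<And>b. b \<in> V \<Longrightarrow> inj_on (f b) (underS R b) \<and> f b ` underS R b \<subseteq> L"
    by blast
  have "L \<noteq> {}" using assms(1) by auto
  then obtain l0 where l0: "l0 \<in> L" by blast
  define c where "c e = (if \<exists>a b. e = {a,b} \<and> a \<in> underS R b
        then (SOME x. \<exists>a b. e = {a,b} \<and> a \<in> underS R b \<and> x = f b a) else l0)" for e
  have cval: "c {a,b} = f b a" if ab: "a \<in> underS R b" for a b
  proof -
    have uniq: "a' = a \<and> b' = b" if "{a,b} = {a',b'}" "a' \<in> underS R b'" for a' b'
    proof -
      have "a \<noteq> b" using ab unfolding underS_def by auto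
      then have "(a = a' \<and> b = b') \<or> (a = b' \<and> b = a')" using that(1) by (simp add: doubleton_eq_iff)
      then show ?thesis
      proof
        assume "a = b' \<and> b = a'"
        then have False using underS_asym[OF W, of a b] ab that(2) by simp
        then show ?thesis ..
      qed simp
    qed
    have ex: "\<exists>a' b'. {a,b} = {a',b'} \<and> a' \<in> underS R b'" using ab by blast
    have "c {a,b} = (SOME x. \<exists>a' b'. {a,b} = {a',b'} \<and> a' \<in> underS R b' \<and> x = f b' a')"
      unfolding c_def using ex by (simp only: if_True)
    also have "\<dots> = f b a"
    proof (rule some_equality)
      show "\<exists>a' b'. {a,b} = {a',b'} \<and> a' \<in> underS R b' \<and> f b a = f b' a'" using ab by blast
    next
      fix x assume "\<exists>a' b'. {a,b} = {a',b'} \<and> a' \<in> underS R b' \<and> x = f b' a'"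
      then obtain a' b' where "{a,b} = {a',b'}" "a' \<in> underS R b'" "x = f b' a'" by blast
      then show "x = f b a" using uniq[of a' b'] by simp
    qed
    finally show ?thesis .
  qed
  have undV: "a \<in> V" "b \<in> V" if "a \<in> underS R b" for a b
    using that unfolding underS_def V_def by (auto intro: FieldI1 FieldI2)
  have tot: "\<And>a b. a \<in> V \<Longrightarrow> b \<in> V \<Longrightarrow> a \<noteq> b \<Longrightarrow> a \<in> underS R b \<or> b \<in> underS R a"
    using wo_facts(3)[OF W] unfolding underS_def V_def by auto
  have part1: "\<forall>e \<in> two_subsets V. c e \<in> L"
  proof
    fix e assume "e \<in> two_subsets V"
    then obtain a b where e: "e = {a,b}" "a \<noteq> b" "a \<in> V" "b \<in> V" using two_sub_pair by metis
    show "c e \<in> L"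
    proof (cases "a \<in> underS R b")
      case True
      then have "c e = f b a" using e(1) cval by simp
      moreover have "f b ` underS R b \<subseteq> L" using f undV(2)[OF True] by blast
      ultimately show ?thesis using True by blast
    next
      case False
      then have ba: "b \<in> underS R a" using tot e by blast
      then have "c e = f a b" using e(1) cval[OF ba] by (simp add: insert_commute)
      moreover have "f a ` underS R a \<subseteq> L" using f undV(2)[OF ba] by blast
      ultimately show ?thesis using ba by blast
    qed
  qed
  have part2: False if xi: "\<xi> \<in> L" and XV: "X \<subseteq> V" and XM: "(card_of X, card_of M) \<in> ordIso"
     and HC: "highly_connected X {e \<in> two_subsets X. c e = \<xi>}" for \<xi> X
  proof -
    define E where "E = {e \<in> two_subsets X. c e = \<xi>}"
    have "(card_of {0, 1, 2 :: nat}, card_of X) \<in> ordLeq"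
      using ordLeq_ordIso_trans[OF assms(2) ordIso_symmetric[OF XM]] .
    then obtain g where g: "inj_on g {0,1,2::nat}" "g ` {0,1,2} \<subseteq> X"
      using card_of_ordLeq[of "{0,1,2::nat}" X] by auto
    have "g 0 \<noteq> g 1"
    proof
      assume "g 0 = g 1" from inj_onD[OF g(1) this] show False by simp
    qed
    moreover have "g 1 \<noteq> g 2"
    proof
      assume "g 1 = g 2" from inj_onD[OF g(1) this] show False by simp
    qed
    moreover have "g 0 \<noteq> g 2"
    proof
      assume "g 0 = g 2" from inj_onD[OF g(1) this] show False by simp
    qed
    moreover have "g 0 \<in> X" "g 1 \<in> X" "g 2 \<in> X" using g(2) by auto
    ultimately obtain t u v where tuv: "t \<in> X" "u \<in> X" "v \<in> X" "u \<noteq> v"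
       "u \<in> underS R t" "v \<in> underS R t"
    proof -
      have "g 0 \<in> Field R" "g 1 \<in> Field R" "g 2 \<in> Field R"
        using \<open>g 0 \<in> X\<close> \<open>g 1 \<in> X\<close> \<open>g 2 \<in> X\<close> XV V_def by auto
      from three_max[OF W this \<open>g 0 \<noteq> g 1\<close> \<open>g 1 \<noteq> g 2\<close> \<open>g 0 \<noteq> g 2\<close>]
      obtain t u v where "t \<in> {g 0, g 1, g 2}" "u \<in> {g 0, g 1, g 2}" "v \<in> {g 0, g 1, g 2}"
        "u \<noteq> v" "u \<in> underS R t" "v \<in> underS R t" by blast
      moreover have sub: "{g 0, g 1, g 2} \<subseteq> X" using \<open>g 0 \<in> X\<close> \<open>g 1 \<in> X\<close> \<open>g 2 \<in> X\<close> by auto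
      ultimately have "t \<in> X" "u \<in> X" "v \<in> X" by (meson subsetD)+
      show ?thesis by (rule that) fact+
    qed
    have tV: "t \<in> V" using tuv XV by auto
    define D where "D = {w \<in> X. w \<in> underS R t \<and> {w,t} \<in> E}"
    have Dsub: "w = w'" if "w \<in> D" "w' \<in> D" for w w'
    proof -
      have w: "w \<in> underS R t" "{w,t} \<in> E" using that(1) unfolding D_def by simp_all
      have w': "w' \<in> underS R t" "{w',t} \<in> E" using that(2) unfolding D_def by simp_all
      have "c {w,t} = \<xi>" using w(2) unfolding E_def by simp
      then have fw: "f t w = \<xi>" using cval[OF w(1)] by simp
      have "c {w',t} = \<xi>" using w'(2) unfolding E_def by simp
      then have fw': "f t w' = \<xi>" using cval[OF w'(1)] by simp
      have "inj_on (f t) (underS R t)" using f[OF tV] by simp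
      from inj_onD[OF this _ w(1) w'(1)] show ?thesis using fw fw' by simp
    qed
    have "\<not> (card_of X, card_of D) \<in> ordLeq"
    proof
      assume "(card_of X, card_of D) \<in> ordLeq"
      then obtain h where h: "inj_on h X" "h ` X \<subseteq> D" using card_of_ordLeq[of X D] by auto
      have "h u \<in> D" using h(2) tuv(2) by (meson image_subset_iff)
      moreover have "h v \<in> D" using h(2) tuv(3) by (meson image_subset_iff)
      ultimately have "h u = h v" by (rule Dsub)
      from inj_onD[OF h(1) this tuv(2) tuv(3)] show False using tuv(4) by simp
    qed
    then have DX: "(card_of D, card_of X) \<in> ordLess"
      using not_ordLeq_iff_ordLess card_of_Well_order by blast
    have Dsub2: "D \<subseteq> X" unfolding D_def by auto
    have tD: "t \<notin> D" unfolding D_def underS_def by auto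
    obtain z where z: "z \<in> X - D" "z \<in> underS R t"
      using Dsub tuv by blast
    define E' where "E' = induced_edges E (X - D)"
    have GC: "graph_connected (X - D) E'"
      using HC Dsub2 DX unfolding highly_connected_def E'_def E_def by blast
    have tXD: "t \<in> X - D" using tuv tD by auto
    have path: "(\<lambda>a b. a \<in> X - D \<and> b \<in> X - D \<and> {a, b} \<in> E')\<^sup>*\<^sup>* t z"
      using GC tXD z unfolding graph_connected_def by blast
    have "y \<in> ups R E' t" if "(\<lambda>a b. a \<in> X - D \<and> b \<in> X - D \<and> {a, b} \<in> E')\<^sup>*\<^sup>* t y" for y
      using that
    proof (induction rule: rtranclp_induct)
      case base then show ?case by (rule ups.base)
    next
      case (step y w)
      have yw: "{y,w} \<in> E'" "y \<in> X - D" "w \<in> X - D" using step.hyps(2) by auto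
      then have yw2: "{y,w} \<in> two_subsets X" "c {y,w} = \<xi>"
        unfolding E'_def E_def induced_edges_def by auto
      then have "y \<noteq> w" unfolding two_subsets_def by auto
      moreover have "y \<in> V" "w \<in> V" using yw XV by auto
      ultimately have "y \<in> underS R w \<or> w \<in> underS R y" using tot by blast
      then show ?case
      proof
        assume "y \<in> underS R w"
        then show ?thesis by (rule ups.step[OF step.IH _ yw(1)])
      next
        assume wy: "w \<in> underS R y"
        from step.IH show ?thesis
        proof (cases rule: ups.cases)
          case base
          have "{w,t} \<in> E" using yw2 base unfolding E_def by (simp add: insert_commute)
          then have "w \<in> D" using wy yw base unfolding D_def by simp
          then show ?thesis using yw by simp
        next
          case (step a)
          have ay: "{a,y} \<in> E'" "a \<in> underS R y" "a \<in> ups R E' t" using step by simp_all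
          from ay(1) have "c {a,y} = \<xi>" unfolding E'_def E_def induced_edges_def by simp
          then have fa: "f y a = \<xi>" using cval[OF ay(2)] by simp
          have "c {w,y} = \<xi>" using yw2(2) by (simp add: insert_commute)
          then have fw: "f y w = \<xi>" using cval[OF wy] by simp
          have "y \<in> V" using undV(2)[OF wy] .
          then have "inj_on (f y) (underS R y)" using f by blast
          then have "a = w" using inj_onD[of "f y" "underS R y" a w] fa fw ay(2) wy by simp
          then show ?thesis using ay(3) by simp
        qed
      qed
    qed
    then have "z \<in> ups R E' t" using path by blast
    then have "z = t \<or> t \<in> underS R z" using ups_ge[OF W] by blast
    then show False using z underS_asym[OF W] unfolding underS_def by blast
  qed
  show ?thesis
    apply (rule exI[of _ c])
    using part1 part2 unfolding V_def R_def by blast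
qed

end
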